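(* Let $(\{\mathcal{I}_i\}_{i=1}^k,Q,W)$ be a weighted stochastic block model on $[n]$ ($n>k$) with $B=Q\odot W$, and suppose there are $\rho\ge1$ and $\Delta>0$ with $\max_i|\mathcal{I}_i|/\min_i|\mathcal{I}_i|\le\rho$ and $\min_iB_{ii}-2\rho\max_i\sum_{j\ne i}B_{ij}\ge\Delta$. Let $A_{\mathrm{blk}}=P_{\{\mathcal{I}_i\}}BP_{\{\mathcal{I}_i\}}^T$ and $L_{\mathrm{blk}}=\mathrm{diag}\{A_{\mathrm{blk}}\mathbf{1}_n\}-A_{\mathrm{blk}}$. Let $n_{\min}=\min_i|\mathcal{I}_i|$ and $b_{\min}=\min_i[B\mathbf{1}_k]_i$. Then: (1) $L_{\mathrm{blk}}$ is $k$-block-ideal (with respect to $\{\mathcal{I}_i\}_{i=1}^k$); (2) $\lambda_{k+1}(L_{\mathrm{blk}})\ge b_{\min}n_{\min}$; (3) $\lambda_{k+1}(L_{\mathrm{blk}})-\lambda_k(L_{\mathrm{blk}})\ge\Delta n_{\min}$.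
   Context: Weighted stochastic block model $(\{\mathcal{I}_i\}_{i=1}^k,Q,W)$: $\{\mathcal{I}_i\}$ a $k$-way partition of $[n]$, $Q\in[0,1]^{k\times k}$ and $W\in\mathbb{R}_{\ge0}^{k\times k}$ symmetric; adjacency entries $A_{ij}=A_{ji}$ equal $W_{(i),(j)}$ with probability $Q_{(i),(j)}$ and $0$ otherwise, independently for $i\ge j$, where $(j)=i$ iff $j\in\mathcal{I}_i$. Thus $A_{\mathrm{blk}}$ is the expected adjacency matrix (as printed). $\odot$ is the Hadamard product; $P_{\{\mathcal{I}_i\}}=[\mathbf{1}_{\mathcal{I}_1}\ \cdots\ \mathbf{1}_{\mathcal{I}_k}]$ with $\mathbf{1}_\mathcal{I}$ the indicator vector of $\mathcal{I}$. $\lambda_i(\cdot)$ denotes the $i$-th smallest eigenvalue. A Laplacian $L$ is $k$-block-ideal with respect to $\{\mathcal{I}_i\}$ if there is an invertible $S\in\mathbb{R}^{k\times k}$ with $[v_1(L)\ \cdots\ v_k(L)]=P_{\{\mathcal{I}_i\}}S$, where $v_1(L),\dots,v_k(L)$ are orthonormal eigenvectors for the $k$ smallest eigenvalues of $L$. *)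

theory Defs
  imports "Jordan_Normal_Form.Char_Poly" "HOL-Library.Multiset"
begin

text \<open>The j-th smallest eigenvalue (1-indexed, counted with algebraic multiplicity)
  of a square real matrix: the j-th entry of the ascending list of roots of the
  characteristic polynomial.\<close>
definition eig_asc :: "real mat \<Rightarrow> nat \<Rightarrow> real" where
  "eig_asc L j = sorted_list_of_multiset (proots (char_poly L)) ! (j - 1)"

definition blk :: "nat \<Rightarrow> (nat \<Rightarrow> nat) \<Rightarrow> nat \<Rightarrow> nat set" where
  "blk n cl j = {i. i < n \<and> cl i = j}"

definition partition_mat :: "nat \<Rightarrow> nat \<Rightarrow> (nat \<Rightarrow> nat) \<Rightarrow> real mat" where
  "partition_mat n k cl = mat n k (\<lambda>(i, j). if cl i = j then 1 else 0)"

definition block_ideal :: "nat \<Rightarrow> nat \<Rightarrow> (nat \<Rightarrow> nat) \<Rightarrow> real mat \<Rightarrow> bool" where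
  "block_ideal n k cl L \<longleftrightarrow>
     (\<exists>v :: nat \<Rightarrow> real vec. \<exists>S.
        (\<forall>j<k. v j \<in> carrier_vec n \<and> L *\<^sub>v v j = eig_asc L (Suc j) \<cdot>\<^sub>v v j) \<and>
        (\<forall>i<k. \<forall>j<k. v i \<bullet> v j = (if i = j then 1 else 0)) \<and>
        S \<in> carrier_mat k k \<and> invertible_mat S \<and>
        mat_of_cols n (map v [0..<k]) = partition_mat n k cl * S)"

end

theory Submission
  imports Defs
begin

lemma real_vec_sq_pos:
  fixes v :: "real vec"
  assumes "v \<in> carrier_vec n" "v \<noteq> 0\<^sub>v n"
  shows "v \<bullet> v > 0"
  using conjugate_square_greater_0_vec[OF assms(1)] assms by simp

lemma real_sym_eigen:
  fixes A :: "real mat"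
  assumes A: "A \<in> carrier_mat n n" and sym: "transpose_mat A = A" and n: "n > 0"
  shows "\<exists>e v. v \<in> carrier_vec n \<and> v \<bullet> v = 1 \<and> A *\<^sub>v v = e \<cdot>\<^sub>v v"
proof -
  define Ac where "Ac = map_mat complex_of_real A"
  have Ac: "Ac \<in> carrier_mat n n" using A by (simp add: Ac_def)
  obtain as where cp: "char_poly Ac = (\<Prod>a\<leftarrow>as. [:- a, 1:])" and len: "length as = n"
    using char_poly_factorized[OF Ac] by blast
  define a where "a = as ! 0"
  have "a \<in> set as" using len n by (simp add: a_def)
  hence "poly (char_poly Ac) a = 0" unfolding cp by (rule linear_poly_root)
  hence "eigenvalue Ac a" using eigenvalue_root_char_poly[OF Ac] by simp
  then obtain z where ev: "eigenvector Ac z a" unfolding eigenvalue_def by blast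
  hence z: "z \<in> carrier_vec n" and z0: "z \<noteq> 0\<^sub>v n" and eq: "Ac *\<^sub>v z = a \<cdot>\<^sub>v z"
    using Ac unfolding eigenvector_def by auto
  have row: "(\<Sum>j<n. complex_of_real (A $$ (i, j)) * z $ j) = a * z $ i" if i: "i < n" for i
  proof -
    have "(Ac *\<^sub>v z) $ i = a * z $ i" using eq z i by simp
    moreover have "(Ac *\<^sub>v z) $ i = (\<Sum>j<n. complex_of_real (A $$ (i, j)) * z $ j)"
      using i A z by (simp add: Ac_def scalar_prod_def lessThan_atLeast0)
    ultimately show ?thesis by simp
  qed
  define s where "s = (\<Sum>i<n. \<Sum>j<n. cnj (z $ i) * complex_of_real (A $$ (i, j)) * z $ j)"
  define r where "r = (\<Sum>i<n. (Re (z $ i))^2 + (Im (z $ i))^2)"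
  have s1: "s = a * complex_of_real r"
  proof -
    have "s = (\<Sum>i<n. cnj (z $ i) * (\<Sum>j<n. complex_of_real (A $$ (i, j)) * z $ j))"
      unfolding s_def by (simp add: sum_distrib_left mult.assoc)
    also have "\<dots> = (\<Sum>i<n. a * (cnj (z $ i) * z $ i))"
      by (rule sum.cong, simp, subst row, auto)
    also have "\<dots> = a * complex_of_real r"
      unfolding r_def by (simp add: sum_distrib_left mult.commute complex_mult_cnj del: of_real_add of_real_power)
    finally show ?thesis .
  qed
  have s2: "cnj s = s"
  proof -
    have symA: "A $$ (i, j) = A $$ (j, i)" if "i < n" "j < n" for i j
      using sym A that by (metis carrier_matD(1) carrier_matD(2) index_transpose_mat(1))
    have "cnj s = (\<Sum>i<n. \<Sum>j<n. z $ i * complex_of_real (A $$ (i, j)) * cnj (z $ j))"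
      unfolding s_def by simp
    also have "\<dots> = (\<Sum>j<n. \<Sum>i<n. z $ i * complex_of_real (A $$ (i, j)) * cnj (z $ j))"
      by (rule sum.swap)
    also have "\<dots> = s" unfolding s_def
      by (intro sum.cong refl, subst symA, auto simp: mult.commute mult.left_commute)
    finally show ?thesis .
  qed
  have rpos: "r > 0"
  proof -
    from z0 z obtain i where i: "i < n" and zi: "z $ i \<noteq> 0" by (metis eq_vecI carrier_vecD index_zero_vec)
    have "(Re (z $ i))^2 + (Im (z $ i))^2 > 0" using zi by (simp add: complex_eq_iff sum_power2_gt_zero_iff)
    moreover have "(Re (z $ i))^2 + (Im (z $ i))^2 \<le> r" unfolding r_def
      by (rule member_le_sum, insert i, auto)
    ultimately show ?thesis by linarith
  qed
  have "Im s = 0" using s2 by (metis cnj.simps(2) complex.expand cnj.simps(1) add.inverse_neutral neg_equal_zero)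
  hence "Im a * r = 0" using s1 by simp
  hence Ima: "Im a = 0" using rpos by simp
  define e where "e = Re a"
  have ae: "a = complex_of_real e" using Ima unfolding e_def by (simp add: complex_eq_iff)
  have pm: "poly (map_poly complex_of_real p) (complex_of_real x) = complex_of_real (poly p x)" for p x
    by simp
  have "complex_of_real (poly (char_poly A) e) = 0"
    using \<open>poly (char_poly Ac) a = 0\<close> of_real_hom.char_poly_hom[OF A] unfolding Ac_def ae pm
    by (metis pm)
  hence "poly (char_poly A) e = 0" by simp
  hence "eigenvalue A e" using eigenvalue_root_char_poly[OF A] by simp
  then obtain v where "eigenvector A v e" unfolding eigenvalue_def by blast
  hence v: "v \<in> carrier_vec n" and v0: "v \<noteq> 0\<^sub>v n" and veq: "A *\<^sub>v v = e \<cdot>\<^sub>v v"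
    using A unfolding eigenvector_def by auto
  have vp: "v \<bullet> v > 0" by (rule real_vec_sq_pos[OF v v0])
  define c where "c = 1 / sqrt (v \<bullet> v)"
  define w where "w = c \<cdot>\<^sub>v v"
  have w: "w \<in> carrier_vec n" using v by (simp add: w_def)
  have "w \<bullet> w = c * c * (v \<bullet> v)" unfolding w_def using v by simp
  also have "\<dots> = 1" unfolding c_def using vp by (simp add: field_simps)
  finally have ww: "w \<bullet> w = 1" .
  have "A *\<^sub>v w = e \<cdot>\<^sub>v w" unfolding w_def using A v veq
    by (simp add: mult_mat_vec smult_smult_assoc mult.commute)
  thus ?thesis using w ww by blast
qed

lemma householder:
  fixes v :: "real vec"
  assumes v: "v \<in> carrier_vec n" and vv: "v \<bullet> v = 1" and n: "n > 0"
  shows "\<exists>W. W \<in> carrier_mat n n \<and> transpose_mat W = W \<and> W * W = 1\<^sub>m n \<and> col W 0 = v"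
proof -
  have vsum: "(\<Sum>i<n. v $ i * v $ i) = 1" using vv v by (simp add: scalar_prod_def lessThan_atLeast0)
  have split: "(\<Sum>i<n. f i) = f 0 + (\<Sum>i\<in>{1..<n}. f i)" for f :: "nat \<Rightarrow> real"
    using n by (metis lessThan_atLeast0 sum.atLeast_Suc_lessThan One_nat_def)
  show ?thesis
  proof (cases "v $ 0 = 1")
    case True
    have "(\<Sum>i\<in>{1..<n}. v $ i * v $ i) = 0" using vsum split[of "\<lambda>i. v $ i * v $ i"] True by simp
    hence z: "\<forall>i\<in>{1..<n}. v $ i * v $ i = 0" by (subst (asm) sum_nonneg_eq_0_iff) auto
    have "col (1\<^sub>m n) 0 = v"
    proof (rule eq_vecI)
      fix i assume "i < dim_vec v"
      hence i: "i < n" using v by simp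
      show "col (1\<^sub>m n) 0 $ i = v $ i"
      proof (cases "i = 0")
        case True thus ?thesis using \<open>v $ 0 = 1\<close> n i by simp
      next
        case False thus ?thesis using z i n by auto
      qed
    qed (use v n in simp)
    thus ?thesis by (intro exI[of _ "1\<^sub>m n"]) auto
  next
    case False
    define u where "u = vec n (\<lambda>i. v $ i - (if i = 0 then 1 else 0))"
    define q where "q = (\<Sum>i<n. u $ i * u $ i)"
    have "v $ 0 * v $ 0 \<le> 1" using vsum split[of "\<lambda>i. v $ i * v $ i"]
    proof -
      have "(\<Sum>i\<in>{1..<n}. v $ i * v $ i) \<ge> 0" by (rule sum_nonneg) simp
      thus ?thesis using vsum split[of "\<lambda>i. v $ i * v $ i"] by linarith
    qed
    hence v0: "v $ 0 < 1" using False by (smt (verit) mult_less_cancel_left2 mult_nonneg_nonneg)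
    have "q = (\<Sum>i<n. v $ i * v $ i) - 2 * v $ 0 + 1"
    proof -
      have "q = (\<Sum>i<n. v $ i * v $ i + (if i = 0 then 1 - 2 * v $ 0 else 0))"
        unfolding q_def u_def by (rule sum.cong, auto simp: algebra_simps)
      also have "\<dots> = (\<Sum>i<n. v $ i * v $ i) + (1 - 2 * v $ 0)"
        using n by (simp add: sum.distrib)
      finally show ?thesis by simp
    qed
    hence q: "q = 2 - 2 * v $ 0" using vsum by simp
    hence qpos: "q > 0" using v0 by simp
    define c where "c = 2 / q"
    have cq: "c * q = 2" using qpos unfolding c_def by simp
    have u0: "c * u $ 0 = -1" using n q qpos unfolding c_def u_def by (simp add: field_simps)
    define W where "W = mat n n (\<lambda>(i, j). (if i = j then 1 else 0) - c * u $ i * u $ j)"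
    have W: "W \<in> carrier_mat n n" unfolding W_def by simp
    have WT: "transpose_mat W = W" unfolding W_def by (rule eq_matI, auto)
    have WW: "W * W = 1\<^sub>m n"
    proof (rule eq_matI)
      fix i j assume "i < dim_row (1\<^sub>m n)" "j < dim_col (1\<^sub>m n)"
      hence i: "i < n" and j: "j < n" by auto
      have "(W * W) $$ (i, j) = (\<Sum>l<n. ((if i = l then 1 else 0) - c * u $ i * u $ l) *
            ((if l = j then 1 else 0) - c * u $ l * u $ j))"
        using i j unfolding W_def by (simp add: scalar_prod_def lessThan_atLeast0)
      also have "\<dots> = (\<Sum>l<n. (if i = l then 1 else 0) * (if l = j then 1 else 0))
          - (\<Sum>l<n. (if i = l then 1 else 0) * (c * u $ l * u $ j))
          - (\<Sum>l<n. (if l = j then 1 else 0) * (c * u $ i * u $ l))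
          + c * c * u $ i * u $ j * (\<Sum>l<n. u $ l * u $ l)"
        by (simp add: algebra_simps sum_subtractf sum.distrib sum_distrib_left)
      also have "\<dots> = (if i = j then 1 else 0) - c * u $ i * u $ j - c * u $ i * u $ j
          + c * (c * q) * u $ i * u $ j"
        using i j unfolding q_def by (simp add: if_distrib[of "\<lambda>x. x * _"] cong: if_cong)
      also have "\<dots> = 1\<^sub>m n $$ (i, j)" using i j cq by simp
      finally show "(W * W) $$ (i, j) = 1\<^sub>m n $$ (i, j)" .
    qed (use W in auto)
    have "col W 0 = v"
    proof (rule eq_vecI)
      fix i assume "i < dim_vec v"
      hence i: "i < n" using v by simp
      have "col W 0 $ i = (if i = 0 then 1 else 0) - (c * u $ 0) * u $ i" using i n unfolding W_def
        by (simp add: algebra_simps)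
      also have "\<dots> = v $ i" unfolding u0 using i by (simp add: u_def)
      finally show "col W 0 $ i = v $ i" .
    qed (use v n W in auto)
    thus ?thesis using W WT WW by blast
  qed
qed

lemma spectral:
  fixes A :: "real mat"
  assumes "A \<in> carrier_mat n n" "transpose_mat A = A"
  shows "\<exists>U D. U \<in> carrier_mat n n \<and> D \<in> carrier_mat n n \<and> diagonal_mat D \<and>
     U * transpose_mat U = 1\<^sub>m n \<and> transpose_mat U * U = 1\<^sub>m n \<and> A = U * D * transpose_mat U"
  using assms
proof (induction n arbitrary: A)
  case 0
  then show ?case by (intro exI[of _ "1\<^sub>m 0"], auto intro!: eq_matI simp: diagonal_mat_def)
next
  case (Suc n1 A)
  define n where "n = Suc n1"
  have A: "A \<in> carrier_mat n n" and sym: "transpose_mat A = A" using Suc.prems n_def by auto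
  obtain e v where v: "v \<in> carrier_vec n" and vv: "v \<bullet> v = 1" and Av: "A *\<^sub>v v = e \<cdot>\<^sub>v v"
    using real_sym_eigen[OF A sym] n_def by auto
  obtain W where W: "W \<in> carrier_mat n n" and WT: "transpose_mat W = W" and WW: "W * W = 1\<^sub>m n"
    and Wc: "col W 0 = v" using householder[OF v vv] n_def by auto
  define A' where "A' = W * A * W"
  have A': "A' \<in> carrier_mat n n" using A W unfolding A'_def by simp
  have A'T: "transpose_mat A' = A'"
    unfolding A'_def using A W
    by (simp add: transpose_mult[of _ n n _ n] WT sym assoc_mult_mat[of _ n n _ n _ n])
  have "col A' 0 = col (W * (A * W)) 0"
    unfolding A'_def using A W by (simp add: assoc_mult_mat[of _ n n _ n _ n])
  also have "\<dots> = W *\<^sub>v col (A * W) 0"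
    by (rule col_mult2[of _ n n _ n], insert A W n_def, auto)
  also have "col (A * W) 0 = A *\<^sub>v col W 0"
    by (rule col_mult2[of _ n n _ n], insert A W n_def, auto)
  also have "W *\<^sub>v (A *\<^sub>v col W 0) = e \<cdot>\<^sub>v (W *\<^sub>v col W 0)" unfolding Wc Av using W v by (simp add: mult_mat_vec)
  also have "W *\<^sub>v col W 0 = col (W * W) 0"
    by (rule col_mult2[symmetric, of _ n n _ n], insert W n_def, auto)
  also have "\<dots> = unit_vec n 0" unfolding WW using n_def by simp
  finally have col0: "col A' 0 = e \<cdot>\<^sub>v unit_vec n 0" .
  have A'0: "A' $$ (i, 0) = (if i = 0 then e else 0)" if "i < n" for i
  proof -
    have "A' $$ (i, 0) = col A' 0 $ i" using A' that n_def by simp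
    thus ?thesis unfolding col0 using that by simp
  qed
  have A'0': "A' $$ (0, j) = (if j = 0 then e else 0)" if "j < n" for j
  proof -
    have "A' $$ (0, j) = transpose_mat A' $$ (j, 0)" using A' that n_def by simp
    thus ?thesis unfolding A'T using A'0[OF that] by simp
  qed
  define A3 where "A3 = mat n1 n1 (\<lambda>(i, j). A' $$ (Suc i, Suc j))"
  have A3: "A3 \<in> carrier_mat n1 n1" unfolding A3_def by simp
  have A3T: "transpose_mat A3 = A3"
  proof (rule eq_matI)
    fix i j assume "i < dim_row A3" "j < dim_col A3"
    hence "i < n1" "j < n1" unfolding A3_def by auto
    thus "transpose_mat A3 $$ (i, j) = A3 $$ (i, j)" unfolding A3_def
      using arg_cong[OF A'T, of "\<lambda>M. M $$ (Suc i, Suc j)"] A' n_def by auto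
  qed (auto simp: A3_def)
  obtain U3 D3 where U3: "U3 \<in> carrier_mat n1 n1" and D3: "D3 \<in> carrier_mat n1 n1"
    and dD3: "diagonal_mat D3" and U3a: "U3 * transpose_mat U3 = 1\<^sub>m n1"
    and U3b: "transpose_mat U3 * U3 = 1\<^sub>m n1" and A3eq: "A3 = U3 * D3 * transpose_mat U3"
    using Suc.IH[OF A3 A3T] by blast
  define E where "E = mat 1 1 (\<lambda>_. e)"
  have E: "E \<in> carrier_mat 1 1" unfolding E_def by simp
  define U' where "U' = four_block_mat (1\<^sub>m 1) (0\<^sub>m 1 n1) (0\<^sub>m n1 1) U3"
  define D where "D = four_block_mat E (0\<^sub>m 1 n1) (0\<^sub>m n1 1) D3"
  have U': "U' \<in> carrier_mat n n" unfolding U'_def n_def using U3 by auto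
  have D: "D \<in> carrier_mat n n" unfolding D_def n_def using D3 E by auto
  have U'T: "transpose_mat U' = four_block_mat (1\<^sub>m 1) (0\<^sub>m 1 n1) (0\<^sub>m n1 1) (transpose_mat U3)"
    unfolding U'_def by (subst transpose_four_block_mat, insert U3, auto)
  have A'blk: "A' = four_block_mat E (0\<^sub>m 1 n1) (0\<^sub>m n1 1) A3"
  proof (rule eq_matI)
    fix i j assume ij: "i < dim_row (four_block_mat E (0\<^sub>m 1 n1) (0\<^sub>m n1 1) A3)"
       "j < dim_col (four_block_mat E (0\<^sub>m 1 n1) (0\<^sub>m n1 1) A3)"
    hence i: "i < n" and j: "j < n" using E A3 n_def by auto
    show "A' $$ (i, j) = four_block_mat E (0\<^sub>m 1 n1) (0\<^sub>m n1 1) A3 $$ (i, j)"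
    proof (cases "i = 0 \<or> j = 0")
      case True
      then show ?thesis using A'0[OF i] A'0'[OF j] i j E A3 n_def by (auto simp: E_def)
    next
      case False
      then obtain i' j' where "i = Suc i'" "j = Suc j'" by (metis not0_implies_Suc)
      then show ?thesis using i j E A3 n_def by (auto simp: A3_def)
    qed
  qed (use A' E A3 n_def in auto)
  have UD: "U' * D = four_block_mat E (0\<^sub>m 1 n1) (0\<^sub>m n1 1) (U3 * D3)"
    unfolding U'_def D_def
    by (subst mult_four_block_mat[of _ 1 1 _ n1 _ n1 _ _ 1 _ n1], insert U3 D3 E, auto)
  have A'eq: "A' = U' * D * transpose_mat U'"
    unfolding UD A'blk U'T A3eq
    by (subst mult_four_block_mat[of _ 1 1 _ n1 _ n1 _ _ 1 _ n1], insert U3 D3 E, auto)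
  have U'U'T: "U' * transpose_mat U' = 1\<^sub>m n" unfolding U'T n_def
    unfolding U'_def
    by (subst mult_four_block_mat[of _ 1 1 _ n1 _ n1 _ _ 1 _ n1], insert U3 U3a, auto)
  have U'TU': "transpose_mat U' * U' = 1\<^sub>m n" unfolding U'T n_def
    unfolding U'_def
    by (subst mult_four_block_mat[of _ 1 1 _ n1 _ n1 _ _ 1 _ n1], insert U3 U3b, auto)
  define U where "U = W * U'"
  have U: "U \<in> carrier_mat n n" unfolding U_def using W U' by simp
  have UT: "transpose_mat U = transpose_mat U' * W"
    unfolding U_def using W U' by (simp add: transpose_mult[of _ n n] WT)
  have U'T: "transpose_mat U' \<in> carrier_mat n n" using U' by simp
  have "U * transpose_mat U = W * (U' * transpose_mat U') * W"
    unfolding UT unfolding U_def using W U' U'T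
    by (simp add: assoc_mult_mat[of _ n n _ n _ n])
  also have "\<dots> = 1\<^sub>m n" unfolding U'U'T using W WW by simp
  finally have Ua: "U * transpose_mat U = 1\<^sub>m n" .
  have "transpose_mat U * U = transpose_mat U' * (W * W) * U'"
    unfolding UT unfolding U_def using W U' U'T
    by (simp add: assoc_mult_mat[of _ n n _ n _ n])
  also have "\<dots> = 1\<^sub>m n" unfolding WW using U'TU' U' U'T by simp
  finally have Ub: "transpose_mat U * U = 1\<^sub>m n" .
  have "U * D * transpose_mat U = W * (U' * D * transpose_mat U') * W"
    unfolding UT unfolding U_def using W U' U'T D
    by (simp add: assoc_mult_mat[of _ n n _ n _ n])
  also have "\<dots> = (W * W) * A * (W * W)"
    unfolding A'eq[symmetric] A'_def using W A
    by (simp add: assoc_mult_mat[of _ n n _ n _ n])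
  also have "\<dots> = A" unfolding WW using A by simp
  finally have Aeq: "A = U * D * transpose_mat U" by simp
  have dD: "diagonal_mat D" using dD3 D3 unfolding D_def diagonal_mat_def E_def
    by (auto simp: n_def)
  show ?case using U D dD Ua Ub Aeq unfolding n_def by blast
qed

lemma dim_le_from_inverse:
  fixes X Y :: "real mat"
  assumes X: "X \<in> carrier_mat a b" and Y: "Y \<in> carrier_mat b a" and XY: "X * Y = 1\<^sub>m a"
  shows "a \<le> b"
proof (rule ccontr)
  assume "\<not> a \<le> b"
  hence ba: "b < a" by simp
  define X' where "X' = mat a a (\<lambda>(i, j). if j < b then X $$ (i, j) else 0)"
  define Y' where "Y' = mat a a (\<lambda>(i, j). if i < b then Y $$ (i, j) else 0)"
  have X': "X' \<in> carrier_mat a a" and Y': "Y' \<in> carrier_mat a a" unfolding X'_def Y'_def by auto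
  have "X' * Y' = 1\<^sub>m a"
  proof (rule eq_matI)
    fix i j assume ij: "i < dim_row (1\<^sub>m a)" "j < dim_col (1\<^sub>m a)"
    hence i: "i < a" and j: "j < a" by auto
    have "(X' * Y') $$ (i, j) = (\<Sum>l\<in>{0..<a}. (if l < b then X $$ (i, l) * Y $$ (l, j) else 0))"
      using i j unfolding X'_def Y'_def by (auto simp: scalar_prod_def intro!: sum.cong)
    also have "\<dots> = (\<Sum>l\<in>{0..<b}. X $$ (i, l) * Y $$ (l, j))"
    proof -
      have "(\<Sum>l\<in>{0..<a}. (if l < b then X $$ (i, l) * Y $$ (l, j) else 0))
          = (\<Sum>l\<in>{0..<b}. (if l < b then X $$ (i, l) * Y $$ (l, j) else 0))"
        using ba by (intro sum.mono_neutral_right) auto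
      thus ?thesis by simp
    qed
    also have "\<dots> = (X * Y) $$ (i, j)" using X Y i j by (simp add: scalar_prod_def)
    finally show "(X' * Y') $$ (i, j) = 1\<^sub>m a $$ (i, j)" unfolding XY .
  qed (use X' Y' in auto)
  hence YX: "Y' * X' = 1\<^sub>m a" using mat_mult_left_right_inverse[OF X' Y'] by blast
  have "(Y' * X') $$ (a - 1, a - 1) = 0"
  proof -
    have "\<not> (a - Suc 0 < b)" using ba by linarith
    thus ?thesis using ba unfolding Y'_def X'_def by (simp add: scalar_prod_def)
  qed
  moreover have "(1\<^sub>m a :: real mat) $$ (a - 1, a - 1) = 1" using ba by simp
  ultimately show False unfolding YX by simp
qed

lemma spectral_list:
  fixes A :: "real mat"
  assumes A: "A \<in> carrier_mat n n" and sym: "transpose_mat A = A"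
  shows "\<exists>vs \<mu>s. length vs = n \<and> length \<mu>s = n \<and> sorted \<mu>s \<and>
    (\<forall>i<n. vs ! i \<in> carrier_vec n \<and> A *\<^sub>v vs ! i = \<mu>s ! i \<cdot>\<^sub>v vs ! i) \<and>
    (\<forall>i<n. \<forall>j<n. vs ! i \<bullet> vs ! j = (if i = j then 1 else 0)) \<and>
    (\<forall>x\<in>carrier_vec n. \<forall>z\<in>carrier_vec n. x \<bullet> z = (\<Sum>i<n. (x \<bullet> vs ! i) * (z \<bullet> vs ! i))) \<and>
    char_poly A = (\<Prod>\<mu>\<leftarrow>\<mu>s. [:- \<mu>, 1:])"
proof -
  obtain U D where U: "U \<in> carrier_mat n n" and D: "D \<in> carrier_mat n n" and dD: "diagonal_mat D"
    and Ua: "U * transpose_mat U = 1\<^sub>m n" and Ub: "transpose_mat U * U = 1\<^sub>m n"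
    and Aeq: "A = U * D * transpose_mat U"
    using spectral[OF A sym] by blast
  define \<theta> where "\<theta> j = D $$ (j, j)" for j
  define u where "u j = col U j" for j
  define idx where "idx = sort_key \<theta> [0..<n]"
  have idx_len: "length idx = n" unfolding idx_def by simp
  have idx_set: "set idx = {..<n}" unfolding idx_def by auto
  have idx_dist: "distinct idx" unfolding idx_def by simp
  have idx_lt: "idx ! i < n" if "i < n" for i using idx_set idx_len that
    by (metis lessThan_iff nth_mem)
  define vs where "vs = map u idx"
  define \<mu>s where "\<mu>s = map \<theta> idx"
  have AU: "A * U = U * D"
  proof -
    have "A * U = U * D * (transpose_mat U * U)" unfolding Aeq using U D
      by (simp add: assoc_mult_mat[of _ n n _ n _ n])
    thus ?thesis unfolding Ub using U D by simp
  qed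
  have eig: "A *\<^sub>v u j = \<theta> j \<cdot>\<^sub>v u j" if j: "j < n" for j
  proof -
    have cD: "col D j = \<theta> j \<cdot>\<^sub>v unit_vec n j"
      by (rule eq_vecI, insert dD D j, auto simp: \<theta>_def diagonal_mat_def)
    have "A *\<^sub>v u j = col (A * U) j" unfolding u_def
      by (rule col_mult2[symmetric, of _ n n _ n], insert A U j, auto)
    also have "\<dots> = U *\<^sub>v col D j" unfolding AU
      by (rule col_mult2[of _ n n _ n], insert U D j, auto)
    also have "\<dots> = \<theta> j \<cdot>\<^sub>v (U *\<^sub>v col (1\<^sub>m n) j)" unfolding cD using U j
      by (simp add: mult_mat_vec col_one)
    also have "U *\<^sub>v col (1\<^sub>m n) j = u j" unfolding u_def using U j
      by (metis col_mult2 one_carrier_mat right_mult_one_mat)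
    finally show ?thesis .
  qed
  have orth: "u i \<bullet> u j = (if i = j then 1 else 0)" if "i < n" "j < n" for i j
  proof -
    have "u i \<bullet> u j = (transpose_mat U * U) $$ (i, j)"
      unfolding u_def using U that by (simp add: row_transpose)
    thus ?thesis unfolding Ub using that by simp
  qed
  have expand: "x \<bullet> z = (\<Sum>j<n. (x \<bullet> u j) * (z \<bullet> u j))"
    if x: "x \<in> carrier_vec n" and z: "z \<in> carrier_vec n" for x z
  proof -
    have "x \<bullet> z = x \<bullet> (U *\<^sub>v (transpose_mat U *\<^sub>v z))"
      using U z by (simp add: assoc_mult_mat_vec[symmetric, of _ n n _ n] Ua)
    also have "\<dots> = (transpose_mat U *\<^sub>v x) \<bullet> (transpose_mat U *\<^sub>v z)"
      by (rule transpose_vec_mult_scalar[symmetric], insert U x z, auto)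
    also have "\<dots> = (\<Sum>j<n. (x \<bullet> u j) * (z \<bullet> u j))"
      using U x z unfolding u_def
      by (simp add: scalar_prod_def[of "transpose_mat U *\<^sub>v x"] lessThan_atLeast0 row_transpose
          comm_scalar_prod[of _ n])
    finally show ?thesis .
  qed
  have perm_sum: "(\<Sum>i<n. f (idx ! i)) = (\<Sum>j<n. f j)" for f :: "nat \<Rightarrow> real"
  proof -
    have "(\<Sum>i<n. f (idx ! i)) = sum_list (map f idx)"
      by (simp add: sum_list_sum_nth idx_len lessThan_atLeast0)
    also have "\<dots> = sum f (set idx)" by (rule sum_list_distinct_conv_sum_set[OF idx_dist])
    finally show ?thesis unfolding idx_set .
  qed
  have cp: "char_poly A = (\<Prod>\<mu>\<leftarrow>\<mu>s. [:- \<mu>, 1:])"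
  proof -
    have sim: "similar_mat A D" unfolding similar_mat_def
      by (rule exI[of _ U], rule exI[of _ "transpose_mat U"], unfold similar_mat_wit_def Let_def,
          insert A U D Ua Ub Aeq, auto)
    have "char_poly A = char_poly D" by (rule char_poly_similar[OF sim])
    also have "\<dots> = (\<Prod>a\<leftarrow>diag_mat D. [:- a, 1:])"
      by (rule char_poly_upper_triangular[OF D], insert dD D, auto simp: diagonal_mat_def upper_triangular_def)
    also have "diag_mat D = map \<theta> [0..<n]" using D by (simp add: diag_mat_def \<theta>_def)
    also have "(\<Prod>a\<leftarrow>map \<theta> [0..<n]. [:- a, 1:]) = (\<Prod>\<mu>\<leftarrow>\<mu>s. [:- \<mu>, 1:])"
    proof -
      have "mset (map \<theta> [0..<n]) = mset \<mu>s" unfolding \<mu>s_def idx_def by simp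
      hence "mset (map (\<lambda>a. [:- a, 1:]) (map \<theta> [0..<n])) = mset (map (\<lambda>a. [:- a, 1:]) \<mu>s)"
        by (metis mset_map)
      thus ?thesis by (metis prod_mset_prod_list)
    qed
    finally show ?thesis .
  qed
  show ?thesis
  proof (intro exI[of _ vs] exI[of _ \<mu>s] conjI allI impI ballI)
    show "length vs = n" "length \<mu>s = n" unfolding vs_def \<mu>s_def using idx_len by auto
    show "sorted \<mu>s" unfolding \<mu>s_def idx_def by (rule sorted_sort_key)
    fix i assume i: "i < n"
    show "vs ! i \<in> carrier_vec n" unfolding vs_def u_def using i idx_len idx_lt[OF i] U by simp
    show "A *\<^sub>v vs ! i = \<mu>s ! i \<cdot>\<^sub>v vs ! i" unfolding vs_def \<mu>s_def
      using eig[OF idx_lt[OF i]] i idx_len by simp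
    fix j assume j: "j < n"
    show "vs ! i \<bullet> vs ! j = (if i = j then 1 else 0)" unfolding vs_def
      using orth[OF idx_lt[OF i] idx_lt[OF j]] i j idx_len idx_dist by (simp add: nth_eq_iff_index_eq)
  next
    fix x z :: "real vec" assume x: "x \<in> carrier_vec n" and z: "z \<in> carrier_vec n"
    have "(\<Sum>i<n. (x \<bullet> vs ! i) * (z \<bullet> vs ! i)) = (\<Sum>i<n. (x \<bullet> u (idx ! i)) * (z \<bullet> u (idx ! i)))"
      unfolding vs_def using idx_len by simp
    also have "\<dots> = (\<Sum>j<n. (x \<bullet> u j) * (z \<bullet> u j))" by (rule perm_sum)
    finally show "x \<bullet> z = (\<Sum>i<n. (x \<bullet> vs ! i) * (z \<bullet> vs ! i))" using expand[OF x z] by simp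
  qed (rule cp)
qed

lemma proots_lin_prod: "proots (\<Prod>\<mu>\<leftarrow>xs. [:- \<mu>, 1:]) = mset (xs :: real list)"
proof (induction xs)
  case Nil then show ?case by simp
next
  case (Cons a xs)
  have "0 \<notin> set (map (\<lambda>\<mu>. [:- \<mu>, 1:]) xs)" by auto
  hence nz: "(\<Prod>\<mu>\<leftarrow>xs. [:- \<mu>, 1:]) \<noteq> (0 :: real poly)"
    by (simp add: prod_list_zero_iff del: set_map)
  have "proots (\<Prod>\<mu>\<leftarrow>a # xs. [:- \<mu>, 1:]) = proots [:- a, 1:] + proots (\<Prod>\<mu>\<leftarrow>xs. [:- \<mu>, 1:])"
    using proots_mult[of "[:- a, 1:]" "\<Prod>\<mu>\<leftarrow>xs. [:- \<mu>, 1:]"] nz by simp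
  then show ?case using Cons by simp
qed

lemma eig_asc_sorted:
  assumes "char_poly L = (\<Prod>\<mu>\<leftarrow>\<mu>s. [:- \<mu>, 1:])" "sorted \<mu>s"
  shows "eig_asc L j = \<mu>s ! (j - 1)"
  unfolding eig_asc_def assms(1) proots_lin_prod using assms(2) by (simp add: sorted_sort_id)

locale wsbm =
  fixes n k :: nat and cl :: "nat \<Rightarrow> nat" and B :: "real mat"
  assumes kn: "k < n" and cl: "\<forall>i<n. cl i < k" and ne: "\<forall>j<k. blk n cl j \<noteq> {}"
   and B: "B \<in> carrier_mat k k" and Bsym: "\<forall>a<k. \<forall>b<k. B $$ (a, b) = B $$ (b, a)"
   and Bnn: "\<forall>a<k. \<forall>b<k. 0 \<le> B $$ (a, b)"
begin

definition "P = partition_mat n k cl"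
definition "A = P * B * transpose_mat P"
definition "L = mat n n (\<lambda>(i, j). if i = j then (A *\<^sub>v vec n (\<lambda>_. 1)) $ i else 0) - A"
definition "nb a = card (blk n cl a)"
definition "d a = (\<Sum>l<k. B $$ (a, l) * real (nb l))"
definition "sb w l = (\<Sum>j\<in>blk n cl l. w $ j)"

lemma kpos: "k > 0" using kn cl by (metis gr_zeroI less_nat_zero_code)

lemma blk_fin: "finite (blk n cl a)" unfolding blk_def by simp

lemma nb_pos: "a < k \<Longrightarrow> nb a > 0"
  using ne blk_fin unfolding nb_def by (simp add: card_gt_0_iff)

lemma group: "(\<Sum>j<n. h j) = (\<Sum>l<k. \<Sum>j\<in>blk n cl l. h j)"
proof -
  have "(\<Sum>l<k. \<Sum>j\<in>{x \<in> {..<n}. cl x = l}. h j) = sum h {..<n}"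
    by (rule sum.group, insert cl, auto)
  moreover have "{x \<in> {..<n}. cl x = l} = blk n cl l" for l unfolding blk_def by auto
  ultimately show ?thesis by simp
qed

lemma group_cl: "(\<Sum>j<n. f (cl j)) = (\<Sum>l<k. real (nb l) * f l)"
proof -
  have "(\<Sum>j<n. f (cl j)) = (\<Sum>l<k. \<Sum>j\<in>blk n cl l. f (cl j))" by (rule group)
  also have "\<dots> = (\<Sum>l<k. \<Sum>j\<in>blk n cl l. f l)"
    by (rule sum.cong, simp, rule sum.cong, auto simp: blk_def)
  also have "\<dots> = (\<Sum>l<k. real (nb l) * f l)" by (simp add: nb_def)
  finally show ?thesis .
qed

lemma P: "P \<in> carrier_mat n k" unfolding P_def partition_mat_def by simp

lemma P_idx: "i < n \<Longrightarrow> a < k \<Longrightarrow> P $$ (i, a) = (if cl i = a then 1 else 0)"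
  unfolding P_def partition_mat_def by simp

lemma sum_delta_cl: "i < n \<Longrightarrow> (\<Sum>a<k. (if cl i = a then 1 else 0) * f a) = (f (cl i) :: real)"
  using cl by (simp add: if_distrib[of "\<lambda>x. x * _"] cong: if_cong)

lemma P_mult: "y \<in> carrier_vec k \<Longrightarrow> i < n \<Longrightarrow> (P *\<^sub>v y) $ i = y $ (cl i)"
  using P by (simp add: scalar_prod_def lessThan_atLeast0[symmetric] P_idx sum_delta_cl)

lemma A: "A \<in> carrier_mat n n" unfolding A_def using P B by simp

lemma A_idx: "i < n \<Longrightarrow> j < n \<Longrightarrow> A $$ (i, j) = B $$ (cl i, cl j)"
proof -
  assume i: "i < n" and j: "j < n"
  have PB: "(P * B) $$ (i, m) = B $$ (cl i, m)" if "m < k" for m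
    using P B i that
    by (simp add: scalar_prod_def lessThan_atLeast0[symmetric] P_idx sum_delta_cl)
  have "A $$ (i, j) = (\<Sum>ia<k. P $$ (i, ia) * (\<Sum>m<k. B $$ (ia, m) * P $$ (j, m)))"
    unfolding A_def using P B i j by (simp add: scalar_prod_def lessThan_atLeast0[symmetric])
  also have "\<dots> = (\<Sum>ia<k. (if cl i = ia then 1 else 0) * (\<Sum>m<k. B $$ (ia, m) * (if cl j = m then 1 else 0)))"
    by (intro sum.cong refl, simp add: P_idx i j)
  also have "\<dots> = (\<Sum>m<k. B $$ (cl i, m) * (if cl j = m then 1 else 0))"
    by (rule sum_delta_cl[OF i])
  also have "\<dots> = B $$ (cl i, cl j)"
    using sum_delta_cl[OF j, of "\<lambda>m. B $$ (cl i, m)"] by (simp add: mult.commute)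
  finally show ?thesis .
qed

lemma A1: "i < n \<Longrightarrow> (A *\<^sub>v vec n (\<lambda>_. 1)) $ i = d (cl i)"
proof -
  assume i: "i < n"
  have "(A *\<^sub>v vec n (\<lambda>_. 1)) $ i = (\<Sum>j<n. B $$ (cl i, cl j))"
    using A i by (simp add: scalar_prod_def lessThan_atLeast0[symmetric] A_idx)
  also have "\<dots> = d (cl i)" unfolding group_cl[of "\<lambda>l. B $$ (cl i, l)"] d_def by (simp add: mult.commute)
  finally show ?thesis .
qed

lemma A1': "i < n \<Longrightarrow> row A i \<bullet> vec n (\<lambda>_. 1) = d (cl i)"
  using A1 A by simp

lemma L: "L \<in> carrier_mat n n" unfolding L_def by (rule minus_carrier_mat[OF A])

lemma L_idx: "i < n \<Longrightarrow> j < n \<Longrightarrow> L $$ (i, j) = (if i = j then d (cl i) else 0) - B $$ (cl i, cl j)"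
  unfolding L_def using A by (simp add: A1' A_idx)

lemma L_sym: "transpose_mat L = L"
  by (rule eq_matI, insert L cl Bsym, auto simp: L_idx)

lemma L_mult: assumes w: "w \<in> carrier_vec n" and i: "i < n"
  shows "(L *\<^sub>v w) $ i = d (cl i) * w $ i - (\<Sum>l<k. B $$ (cl i, l) * sb w l)"
proof -
  have "(L *\<^sub>v w) $ i = (\<Sum>j<n. ((if i = j then d (cl i) else 0) - B $$ (cl i, cl j)) * w $ j)"
    using L i w by (simp add: scalar_prod_def lessThan_atLeast0[symmetric] L_idx)
  also have "\<dots> = d (cl i) * w $ i - (\<Sum>j<n. B $$ (cl i, cl j) * w $ j)"
    using i by (simp add: algebra_simps sum_subtractf if_distrib[of "\<lambda>x. x * _"] if_distrib[of "\<lambda>x. _ * x"] cong: if_cong)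
  also have "(\<Sum>j<n. B $$ (cl i, cl j) * w $ j) = (\<Sum>l<k. \<Sum>j\<in>blk n cl l. B $$ (cl i, cl j) * w $ j)"
    by (rule group)
  also have "\<dots> = (\<Sum>l<k. B $$ (cl i, l) * sb w l)" unfolding sb_def
    by (rule sum.cong, simp, subst sum_distrib_left, rule sum.cong, auto simp: blk_def)
  finally show ?thesis .
qed

end

context wsbm begin

definition "off a = (\<Sum>l\<in>{..<k} - {a}. B $$ (a, l))"
definition "nmaxN = Max (nb ` {..<k})"
definition "offmax = Max (off ` {..<k})"
definition "cc = 2 * real nmaxN * offmax"
definition "mind = Min (d ` {..<k})"

lemma fin_img: "finite (f ` {..<k})" "f ` {..<k} \<noteq> {}" using kpos by auto

lemma nb_le: "a < k \<Longrightarrow> nb a \<le> nmaxN" unfolding nmaxN_def using fin_img by auto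
lemma off_le: "a < k \<Longrightarrow> off a \<le> offmax" unfolding offmax_def using fin_img by auto
lemma d_ge: "a < k \<Longrightarrow> mind \<le> d a" unfolding mind_def using fin_img by auto
lemma off_nn: "a < k \<Longrightarrow> 0 \<le> off a" unfolding off_def using Bnn by (auto intro!: sum_nonneg)
lemma offmax_nn: "0 \<le> offmax" using off_nn[OF kpos] off_le[OF kpos] by linarith
lemma cc_nn: "0 \<le> cc" unfolding cc_def using offmax_nn by simp

lemma eigD: assumes "L *\<^sub>v w = \<theta> \<cdot>\<^sub>v w" "w \<in> carrier_vec n" "i < n"
  shows "(L *\<^sub>v w) $ i = \<theta> * w $ i"
  using assms by (metis carrier_vecD index_smult_vec(1))

lemma block_eq: assumes w: "w \<in> carrier_vec n" and ev: "L *\<^sub>v w = \<theta> \<cdot>\<^sub>v w" and a: "a < k"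
  shows "d a * sb w a - real (nb a) * (\<Sum>l<k. B $$ (a, l) * sb w l) = \<theta> * sb w a"
proof -
  have "(\<Sum>i\<in>blk n cl a. (L *\<^sub>v w) $ i) = (\<Sum>i\<in>blk n cl a. \<theta> * w $ i)"
    by (rule sum.cong, auto simp: blk_def eigD[OF ev w])
  also have "\<dots> = \<theta> * sb w a" unfolding sb_def by (simp add: sum_distrib_left)
  also have "(\<Sum>i\<in>blk n cl a. (L *\<^sub>v w) $ i) =
      (\<Sum>i\<in>blk n cl a. d a * w $ i - (\<Sum>l<k. B $$ (a, l) * sb w l))"
    by (rule sum.cong, auto simp: blk_def L_mult[OF w])
  also have "\<dots> = d a * sb w a - real (nb a) * (\<Sum>l<k. B $$ (a, l) * sb w l)"
    unfolding sb_def nb_def by (simp add: sum_subtractf sum_distrib_left)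
  finally show ?thesis .
qed

definition "yv \<theta> w = vec k (\<lambda>a. (\<Sum>l<k. B $$ (a, l) * sb w l) / (d a - \<theta>))"

lemma E1: assumes w: "w \<in> carrier_vec n" and ev: "L *\<^sub>v w = \<theta> \<cdot>\<^sub>v w" and th: "\<theta> < mind"
  shows "w = P *\<^sub>v yv \<theta> w"
proof (rule eq_vecI)
  fix i assume "i < dim_vec (P *\<^sub>v yv \<theta> w)"
  hence i: "i < n" using P by simp
  have ci: "cl i < k" using cl i by simp
  have pos: "d (cl i) - \<theta> > 0" using d_ge[OF ci] th by simp
  have "d (cl i) * w $ i - (\<Sum>l<k. B $$ (cl i, l) * sb w l) = \<theta> * w $ i"
    using L_mult[OF w i] eigD[OF ev w i] by simp
  hence "(d (cl i) - \<theta>) * w $ i = (\<Sum>l<k. B $$ (cl i, l) * sb w l)" by (simp add: algebra_simps)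
  hence "w $ i = (\<Sum>l<k. B $$ (cl i, l) * sb w l) / (d (cl i) - \<theta>)" using pos
    by (simp add: field_simps)
  thus "w $ i = (P *\<^sub>v yv \<theta> w) $ i" using P_mult[of "yv \<theta> w" i] i ci by (simp add: yv_def)
qed (use w P in simp)

lemma E3: assumes w: "w \<in> carrier_vec n" and ev: "L *\<^sub>v w = \<theta> \<cdot>\<^sub>v w" and th: "\<theta> > cc"
  shows "\<forall>a<k. sb w a = 0"
proof (rule ccontr)
  assume "\<not> (\<forall>a<k. sb w a = 0)"
  then obtain a0 where a0: "a0 < k" "sb w a0 \<noteq> 0" by auto
  define M where "M = Max ((\<lambda>l. \<bar>sb w l\<bar>) ` {..<k})"
  have "M \<in> (\<lambda>l. \<bar>sb w l\<bar>) ` {..<k}" unfolding M_def using fin_img by (rule Max_in)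
  then obtain a where a: "a < k" and Ma: "M = \<bar>sb w a\<bar>" by auto
  have le: "\<bar>sb w l\<bar> \<le> \<bar>sb w a\<bar>" if "l < k" for l
    unfolding Ma[symmetric] M_def using fin_img that by auto
  have Mpos: "\<bar>sb w a\<bar> > 0" using le[OF a0(1)] a0(2) by linarith
  have be: "d a * sb w a - real (nb a) * (\<Sum>l<k. B $$ (a, l) * sb w l) = \<theta> * sb w a"
    by (rule block_eq[OF w ev a])
  have ak: "a \<in> {..<k}" using a by simp
  have d_split: "d a = B $$ (a, a) * real (nb a) + (\<Sum>l\<in>{..<k} - {a}. B $$ (a, l) * real (nb l))"
    unfolding d_def using sum.remove[OF _ ak, of "\<lambda>l. B $$ (a, l) * real (nb l)"] by simp
  have s_split: "(\<Sum>l<k. B $$ (a, l) * sb w l) = B $$ (a, a) * sb w a + (\<Sum>l\<in>{..<k} - {a}. B $$ (a, l) * sb w l)"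
    using sum.remove[OF _ ak, of "\<lambda>l. B $$ (a, l) * sb w l"] by simp
  define S1 where "S1 = (\<Sum>l\<in>{..<k} - {a}. B $$ (a, l) * real (nb l))"
  define S2 where "S2 = (\<Sum>l\<in>{..<k} - {a}. B $$ (a, l) * sb w l)"
  have th_eq: "\<theta> * sb w a = S1 * sb w a - real (nb a) * S2"
    using be unfolding d_split s_split S1_def[symmetric] S2_def[symmetric] by (simp add: algebra_simps)
  have S1b: "S1 \<le> real nmaxN * off a" unfolding S1_def off_def sum_distrib_left
    by (rule sum_mono, insert Bnn nb_le a, auto simp: mult.commute intro!: mult_left_mono)
  have S2b: "\<bar>S2\<bar> \<le> off a * \<bar>sb w a\<bar>" unfolding S2_def off_def sum_distrib_right
  proof -
    have "\<bar>\<Sum>l\<in>{..<k} - {a}. B $$ (a, l) * sb w l\<bar> \<le> (\<Sum>l\<in>{..<k} - {a}. \<bar>B $$ (a, l) * sb w l\<bar>)"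
      by (rule sum_abs)
    also have "\<dots> \<le> (\<Sum>l\<in>{..<k} - {a}. B $$ (a, l) * \<bar>sb w a\<bar>)"
      by (rule sum_mono, insert Bnn a le, auto simp: abs_mult intro!: mult_left_mono)
    finally show "\<bar>\<Sum>l\<in>{..<k} - {a}. B $$ (a, l) * sb w l\<bar> \<le> (\<Sum>l\<in>{..<k} - {a}. B $$ (a, l) * \<bar>sb w a\<bar>)" .
  qed
  have "\<theta> * \<bar>sb w a\<bar> = \<bar>\<theta> * sb w a\<bar>" using th cc_nn by (simp add: abs_mult)
  also have "\<dots> \<le> \<bar>S1 * sb w a\<bar> + \<bar>real (nb a) * S2\<bar>" unfolding th_eq by linarith
  also have "\<dots> = S1 * \<bar>sb w a\<bar> + real (nb a) * \<bar>S2\<bar>"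
  proof -
    have "S1 \<ge> 0" unfolding S1_def using Bnn a by (intro sum_nonneg) auto
    thus ?thesis by (simp add: abs_mult)
  qed
  also have "\<dots> \<le> real nmaxN * off a * \<bar>sb w a\<bar> + real nmaxN * (off a * \<bar>sb w a\<bar>)"
  proof (rule add_mono)
    show "S1 * \<bar>sb w a\<bar> \<le> real nmaxN * off a * \<bar>sb w a\<bar>" using S1b by (simp add: mult_right_mono)
    have "real (nb a) * \<bar>S2\<bar> \<le> real nmaxN * \<bar>S2\<bar>" using nb_le[OF a] by (simp add: mult_right_mono)
    also have "\<dots> \<le> real nmaxN * (off a * \<bar>sb w a\<bar>)" using S2b by (simp add: mult_left_mono)
    finally show "real (nb a) * \<bar>S2\<bar> \<le> real nmaxN * (off a * \<bar>sb w a\<bar>)" .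
  qed
  also have "\<dots> = (2 * real nmaxN * off a) * \<bar>sb w a\<bar>" by (simp add: algebra_simps)
  also have "\<dots> \<le> cc * \<bar>sb w a\<bar>" unfolding cc_def using off_le[OF a]
    by (intro mult_right_mono, auto intro: mult_left_mono)
  finally have "\<theta> * \<bar>sb w a\<bar> \<le> cc * \<bar>sb w a\<bar>" .
  hence "\<theta> \<le> cc" using Mpos by simp
  thus False using th by simp
qed

lemma E2: assumes w: "w \<in> carrier_vec n" and w0: "w \<noteq> 0\<^sub>v n" and ev: "L *\<^sub>v w = \<theta> \<cdot>\<^sub>v w"
  shows "\<theta> \<le> cc \<or> \<theta> \<ge> mind"
proof (rule ccontr)
  assume "\<not> (\<theta> \<le> cc \<or> \<theta> \<ge> mind)"
  hence th: "\<theta> > cc" "\<theta> < mind" by auto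
  from w0 w obtain i where i: "i < n" and wi: "w $ i \<noteq> 0" by (metis eq_vecI carrier_vecD index_zero_vec)
  have ci: "cl i < k" using cl i by simp
  have "d (cl i) * w $ i - (\<Sum>l<k. B $$ (cl i, l) * sb w l) = \<theta> * w $ i"
    using L_mult[OF w i] eigD[OF ev w i] by simp
  hence "d (cl i) * w $ i = \<theta> * w $ i" using E3[OF w ev th(1)] by simp
  hence "d (cl i) = \<theta>" using wi by simp
  thus False using d_ge[OF ci] th by simp
qed

lemma inner_P: assumes y: "y \<in> carrier_vec k" and z: "z \<in> carrier_vec k"
  shows "(P *\<^sub>v y) \<bullet> (P *\<^sub>v z) = (\<Sum>a<k. real (nb a) * (y $ a * z $ a))"
proof -
  have "(P *\<^sub>v y) \<bullet> (P *\<^sub>v z) = (\<Sum>i<n. y $ cl i * z $ cl i)"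
  proof -
    have "(P *\<^sub>v y) \<bullet> (P *\<^sub>v z) = (\<Sum>i<n. (P *\<^sub>v y) $ i * (P *\<^sub>v z) $ i)"
      using P by (simp add: scalar_prod_def lessThan_atLeast0[symmetric])
    also have "\<dots> = (\<Sum>i<n. y $ cl i * z $ cl i)" by (rule sum.cong, auto simp: P_mult y z)
    finally show ?thesis .
  qed
  also have "\<dots> = (\<Sum>a<k. real (nb a) * (y $ a * z $ a))" by (rule group_cl)
  finally show ?thesis .
qed

definition "ind a = vec n (\<lambda>i. if cl i = a then 1 else (0::real))"

lemma ind: "ind a \<in> carrier_vec n" unfolding ind_def by simp

lemma ind_w: assumes w: "w \<in> carrier_vec n" shows "ind a \<bullet> w = sb w a"
proof -
  have "ind a \<bullet> w = (\<Sum>i\<in>{..<n}. if cl i = a then w $ i else 0)"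
    unfolding ind_def using w by (simp add: scalar_prod_def lessThan_atLeast0[symmetric] if_distrib[of "\<lambda>x. x * _"] cong: if_cong)
  also have "\<dots> = sum (\<lambda>i. w $ i) {i \<in> {..<n}. cl i = a}" by (rule sum.inter_filter[symmetric]) simp
  also have "{i \<in> {..<n}. cl i = a} = blk n cl a" unfolding blk_def by auto
  finally show ?thesis unfolding sb_def .
qed

lemma ind_ind: "ind a \<bullet> ind b = (if a = b then real (nb a) else 0)"
proof -
  have "ind a \<bullet> ind b = sb (ind b) a" by (rule ind_w[OF ind])
  also have "\<dots> = (\<Sum>j\<in>blk n cl a. if a = b then 1 else 0)" unfolding sb_def ind_def
    by (rule sum.cong, auto simp: blk_def)
  also have "\<dots> = (if a = b then real (nb a) else 0)" by (simp add: nb_def)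
  finally show ?thesis .
qed

end

context wsbm begin

lemma gram_inv:
  assumes ys: "\<forall>i<m. ys i \<in> carrier_vec k"
    and orth: "\<forall>i<m. \<forall>j<m. (P *\<^sub>v ys i) \<bullet> (P *\<^sub>v ys j) = (if i = j then 1 else 0)"
  shows "mat m k (\<lambda>(i, a). real (nb a) * ys i $ a) * mat k m (\<lambda>(a, j). ys j $ a) = 1\<^sub>m m"
proof (rule eq_matI)
  fix i j assume "i < dim_row (1\<^sub>m m :: real mat)" "j < dim_col (1\<^sub>m m :: real mat)"
  hence i: "i < m" and j: "j < m" by auto
  have "(mat m k (\<lambda>(i, a). real (nb a) * ys i $ a) * mat k m (\<lambda>(a, j). ys j $ a)) $$ (i, j)
      = (\<Sum>a<k. real (nb a) * (ys i $ a * ys j $ a))"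
    using i j by (simp add: scalar_prod_def lessThan_atLeast0[symmetric] mult.assoc)
  also have "\<dots> = (P *\<^sub>v ys i) \<bullet> (P *\<^sub>v ys j)" using inner_P ys i j by simp
  also have "\<dots> = 1\<^sub>m m $$ (i, j)" using orth i j by simp
  finally show "(mat m k (\<lambda>(i, a). real (nb a) * ys i $ a) * mat k m (\<lambda>(a, j). ys j $ a)) $$ (i, j)
      = 1\<^sub>m m $$ (i, j)" .
qed auto

lemma main_spec:
  assumes gap: "cc < mind"
  shows "block_ideal n k cl L \<and> eig_asc L (k + 1) \<ge> mind \<and> eig_asc L k \<le> cc"
proof -
  obtain vs \<mu>s where len: "length vs = n" "length \<mu>s = n" and srt: "sorted \<mu>s"
    and ev: "\<forall>i<n. vs ! i \<in> carrier_vec n \<and> L *\<^sub>v vs ! i = \<mu>s ! i \<cdot>\<^sub>v vs ! i"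
    and on: "\<forall>i<n. \<forall>j<n. vs ! i \<bullet> vs ! j = (if i = j then 1 else 0)"
    and exp: "\<forall>x\<in>carrier_vec n. \<forall>z\<in>carrier_vec n. x \<bullet> z = (\<Sum>i<n. (x \<bullet> vs ! i) * (z \<bullet> vs ! i))"
    and cp: "char_poly L = (\<Prod>\<mu>\<leftarrow>\<mu>s. [:- \<mu>, 1:])"
    using spectral_list[OF L L_sym] by blast
  have eigA: "eig_asc L j = \<mu>s ! (j - 1)" for j by (rule eig_asc_sorted[OF cp srt])
  have vc: "vs ! i \<in> carrier_vec n" and vev: "L *\<^sub>v vs ! i = \<mu>s ! i \<cdot>\<^sub>v vs ! i" if "i < n" for i
    using ev that by auto
  have v0: "vs ! i \<noteq> 0\<^sub>v n" if i: "i < n" for i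
  proof
    assume "vs ! i = 0\<^sub>v n"
    hence "vs ! i \<bullet> vs ! i = 0" by simp
    thus False using on i by simp
  qed
  have dich: "\<mu>s ! i \<le> cc \<or> \<mu>s ! i \<ge> mind" if "i < n" for i
    by (rule E2[OF vc[OF that] v0[OF that] vev[OF that]])
  have mono: "\<mu>s ! i \<le> \<mu>s ! j" if "i \<le> j" "j < n" for i j
    using sorted_nth_mono[OF srt that(1)] that len by simp
  define ys where "ys i = yv (\<mu>s ! i) (vs ! i)" for i
  have ysc: "ys i \<in> carrier_vec k" for i unfolding ys_def yv_def by simp
  have vsP: "vs ! i = P *\<^sub>v ys i" if "i < n" "\<mu>s ! i < mind" for i
    unfolding ys_def by (rule E1[OF vc vev], insert that, auto)
  have k1: "k - 1 < n" "k < n" using kn by auto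
  have a: "\<mu>s ! k > cc"
  proof (rule ccontr)
    assume "\<not> \<mu>s ! k > cc"
    hence le: "\<mu>s ! i < mind" if "i < Suc k" for i
      using mono[of i k] that kn gap by fastforce
    have "mat (Suc k) k (\<lambda>(i, a). real (nb a) * ys i $ a) * mat k (Suc k) (\<lambda>(a, j). ys j $ a) = 1\<^sub>m (Suc k)"
    proof (rule gram_inv)
      show "\<forall>i<Suc k. ys i \<in> carrier_vec k" using ysc by simp
      show "\<forall>i<Suc k. \<forall>j<Suc k. (P *\<^sub>v ys i) \<bullet> (P *\<^sub>v ys j) = (if i = j then 1 else 0)"
        using on vsP le kn by (metis Suc_le_eq le_trans less_imp_le_nat not_less_eq_eq)
    qed
    hence "Suc k \<le> k" by (rule dim_le_from_inverse[rotated 2], auto)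
    thus False by simp
  qed
  have b: "\<mu>s ! (k - 1) \<le> cc"
  proof (rule ccontr)
    assume "\<not> \<mu>s ! (k - 1) \<le> cc"
    hence gt: "\<mu>s ! i > cc" if "k - 1 \<le> i" "i < n" for i using mono[OF that] by simp
    define C where "C a i = ind a \<bullet> vs ! i" for a i
    have C0: "C a i = 0" if "k - 1 \<le> i" "i < n" "a < k" for a i
      unfolding C_def using ind_w[OF vc[OF that(2)]] E3[OF vc[OF that(2)] vev[OF that(2)] gt[OF that(1,2)]] that(3)
      by simp
    have indd: "(if a = b then real (nb a) else 0) = (\<Sum>i<k - 1. C a i * C b i)" if "a < k" "b < k" for a b
    proof -
      have "(if a = b then real (nb a) else 0) = (\<Sum>i<n. C a i * C b i)"
        unfolding ind_ind[symmetric] C_def using exp ind by blast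
      also have "\<dots> = (\<Sum>i<k - 1. C a i * C b i)"
      proof (rule sum.mono_neutral_right)
        show "finite {..<n}" by simp
        show "{..<k - 1} \<subseteq> {..<n}" using k1 by auto
        show "\<forall>i\<in>{..<n} - {..<k - 1}. C a i * C b i = 0" using C0 that by auto
      qed
      finally show ?thesis .
    qed
    have "mat k (k - 1) (\<lambda>(a, i). C a i / real (nb a)) * mat (k - 1) k (\<lambda>(i, b). C b i) = 1\<^sub>m k"
    proof (rule eq_matI)
      fix a b assume "a < dim_row (1\<^sub>m k :: real mat)" "b < dim_col (1\<^sub>m k :: real mat)"
      hence a: "a < k" and b: "b < k" by auto
      have "(mat k (k - 1) (\<lambda>(a, i). C a i / real (nb a)) * mat (k - 1) k (\<lambda>(i, b). C b i)) $$ (a, b)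
          = (\<Sum>i<k - 1. C a i * C b i) / real (nb a)"
        using a b by (simp add: scalar_prod_def lessThan_atLeast0[symmetric] sum_divide_distrib)
      also have "\<dots> = 1\<^sub>m k $$ (a, b)" unfolding indd[OF a b, symmetric] using a b nb_pos[OF a] by auto
      finally show "(mat k (k - 1) (\<lambda>(a, i). C a i / real (nb a)) * mat (k - 1) k (\<lambda>(i, b). C b i)) $$ (a, b)
          = 1\<^sub>m k $$ (a, b)" .
    qed auto
    hence "k \<le> k - 1" by (rule dim_le_from_inverse[rotated 2], auto)
    thus False using kpos by simp
  qed
  have c1: "eig_asc L (k + 1) \<ge> mind" using eigA[of "k + 1"] dich[OF k1(2)] a by simp
  have c2: "eig_asc L k \<le> cc" using eigA[of k] b by simp
  have lt: "\<mu>s ! j < mind" if "j < k" for j using mono[of j "k - 1"] that k1 b gap by fastforce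
  define S where "S = mat k k (\<lambda>(a, j). ys j $ a)"
  define X where "X = mat k k (\<lambda>(j, a). real (nb a) * ys j $ a)"
  have S: "S \<in> carrier_mat k k" and X: "X \<in> carrier_mat k k" unfolding S_def X_def by auto
  have XS: "X * S = 1\<^sub>m k" unfolding X_def S_def
  proof (rule gram_inv)
    show "\<forall>i<k. ys i \<in> carrier_vec k" using ysc by simp
    show "\<forall>i<k. \<forall>j<k. (P *\<^sub>v ys i) \<bullet> (P *\<^sub>v ys j) = (if i = j then 1 else 0)"
      using on vsP lt kn by (metis order.strict_trans)
  qed
  have SX: "S * X = 1\<^sub>m k" by (rule mat_mult_left_right_inverse[OF X S XS])
  have inv: "invertible_mat S" unfolding invertible_mat_def inverts_mat_def square_mat.simps
    using S X XS SX by auto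
  have colS: "col S j = ys j" if "j < k" for j
  proof -
    have "dim_vec (ys j) = k" using ysc[of j] by simp
    thus ?thesis unfolding S_def using that by (intro eq_vecI, auto)
  qed
  have eqm: "mat_of_cols n (map (\<lambda>j. vs ! j) [0..<k]) = P * S"
  proof (rule eq_matI)
    fix i j assume "i < dim_row (P * S)" "j < dim_col (P * S)"
    hence i: "i < n" and j: "j < k" using P S by auto
    have "mat_of_cols n (map (\<lambda>j. vs ! j) [0..<k]) $$ (i, j) = vs ! j $ i" using i j by (simp add: mat_of_cols_index)
    also have "\<dots> = (P *\<^sub>v ys j) $ i" using vsP[OF _ lt[OF j]] j kn by simp
    also have "\<dots> = (P * S) $$ (i, j)" using P S i j colS[OF j] by simp
    finally show "mat_of_cols n (map (\<lambda>j. vs ! j) [0..<k]) $$ (i, j) = (P * S) $$ (i, j)" .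
  qed (use P S in auto)
  have bi: "block_ideal n k cl L"
    unfolding block_ideal_def
  proof (intro exI[of _ "\<lambda>j. vs ! j"] exI[of _ S] conjI allI impI)
    fix j assume j: "j < k"
    show "vs ! j \<in> carrier_vec n" using vc j kn by simp
    show "L *\<^sub>v vs ! j = eig_asc L (Suc j) \<cdot>\<^sub>v vs ! j" using vev[of j] j kn eigA[of "Suc j"] by simp
  next
    fix i j assume "i < k" "j < k"
    thus "vs ! i \<bullet> vs ! j = (if i = j then 1 else 0)" using on kn by simp
  next
    show "mat_of_cols n (map (\<lambda>j. vs ! j) [0..<k]) = partition_mat n k cl * S"
      using eqm unfolding P_def .
  qed (use S inv in auto)
  show ?thesis using bi c1 c2 by simp
qed

end

context wsbm begin

lemma numeric:
  fixes \<rho> \<Delta> :: real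
  assumes rho: "\<rho> \<ge> 1" and Dpos: "\<Delta> > 0"
    and ratio: "real (MAX j\<in>{..<k}. card (blk n cl j)) / real (MIN j\<in>{..<k}. card (blk n cl j)) \<le> \<rho>"
    and hyp: "(MIN i\<in>{..<k}. B $$ (i, i)) - 2 * \<rho> * (MAX i\<in>{..<k}. \<Sum>j\<in>{..<k} - {i}. B $$ (i, j)) \<ge> \<Delta>"
  shows "mind - cc \<ge> \<Delta> * real (MIN j\<in>{..<k}. card (blk n cl j))"
    and "mind \<ge> (MIN i\<in>{..<k}. (B *\<^sub>v vec k (\<lambda>_. 1)) $ i) * real (MIN j\<in>{..<k}. card (blk n cl j))"
proof -
  define nmin where "nmin = real (MIN j\<in>{..<k}. card (blk n cl j))"
  define Bd where "Bd = (MIN i\<in>{..<k}. B $$ (i, i))"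
  have nbeq: "(\<lambda>j. card (blk n cl j)) = nb" unfolding nb_def by auto
  have nmaxeq: "(MAX j\<in>{..<k}. card (blk n cl j)) = nmaxN" unfolding nmaxN_def nbeq ..
  have offeq: "(MAX i\<in>{..<k}. \<Sum>j\<in>{..<k} - {i}. B $$ (i, j)) = offmax" unfolding offmax_def off_def ..
  have nmin_le: "nmin \<le> real (nb a)" if "a < k" for a
    unfolding nmin_def nbeq using fin_img that by auto
  have nmin_pos: "nmin > 0"
  proof -
    have "(MIN j\<in>{..<k}. nb j) \<in> nb ` {..<k}" using fin_img by (rule Min_in)
    then obtain a where "a < k" "(MIN j\<in>{..<k}. nb j) = nb a" by auto
    thus ?thesis unfolding nmin_def nbeq using nb_pos by simp
  qed
  have nmax: "real nmaxN \<le> \<rho> * nmin"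
    using ratio nmin_pos unfolding nmaxeq nmin_def[symmetric] by (simp add: field_simps)
  have Bd_le: "Bd \<le> B $$ (a, a)" if "a < k" for a unfolding Bd_def using fin_img that by auto
  have d_lb: "d a \<ge> Bd * nmin" if a: "a < k" for a
  proof -
    have "B $$ (a, a) * real (nb a) \<le> d a" unfolding d_def
      by (rule member_le_sum[of a "{..<k}" "\<lambda>l. B $$ (a, l) * real (nb l)"], insert a Bnn, auto)
    moreover have "Bd * nmin \<le> B $$ (a, a) * nmin" using Bd_le[OF a] nmin_pos by (simp add: mult_right_mono)
    moreover have "B $$ (a, a) * nmin \<le> B $$ (a, a) * real (nb a)"
      using nmin_le[OF a] Bnn a by (simp add: mult_left_mono)
    ultimately show ?thesis by linarith
  qed
  have mind_lb: "mind \<ge> Bd * nmin" unfolding mind_def using fin_img d_lb by auto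
  have cc_ub: "cc \<le> 2 * \<rho> * nmin * offmax" unfolding cc_def
    using nmax offmax_nn by (simp add: mult_right_mono)
  have "\<Delta> * nmin \<le> (Bd - 2 * \<rho> * offmax) * nmin"
    using hyp nmin_pos unfolding Bd_def[symmetric] offeq by (simp add: mult_right_mono)
  also have "\<dots> = Bd * nmin - 2 * \<rho> * nmin * offmax" by (simp add: algebra_simps)
  also have "\<dots> \<le> mind - cc" using mind_lb cc_ub by linarith
  finally show "mind - cc \<ge> \<Delta> * real (MIN j\<in>{..<k}. card (blk n cl j))" unfolding nmin_def .
  define bmin where "bmin = (MIN i\<in>{..<k}. (B *\<^sub>v vec k (\<lambda>_. 1)) $ i)"
  have rs: "(B *\<^sub>v vec k (\<lambda>_. 1)) $ a = (\<Sum>l<k. B $$ (a, l))" if "a < k" for a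
    using B that by (simp add: scalar_prod_def lessThan_atLeast0)
  have "d a \<ge> bmin * nmin" if a: "a < k" for a
  proof -
    have "bmin \<le> (\<Sum>l<k. B $$ (a, l))" unfolding bmin_def rs[OF a, symmetric] using fin_img a by auto
    hence "bmin * nmin \<le> (\<Sum>l<k. B $$ (a, l)) * nmin" using nmin_pos by (simp add: mult_right_mono)
    also have "\<dots> = (\<Sum>l<k. B $$ (a, l) * nmin)" by (simp add: sum_distrib_right)
    also have "\<dots> \<le> d a" unfolding d_def
      by (rule sum_mono, insert nmin_le Bnn a, auto intro: mult_left_mono)
    finally show ?thesis .
  qed
  thus "mind \<ge> (MIN i\<in>{..<k}. (B *\<^sub>v vec k (\<lambda>_. 1)) $ i) * real (MIN j\<in>{..<k}. card (blk n cl j))"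
    unfolding bmin_def[symmetric] nmin_def[symmetric] mind_def using fin_img by auto
qed

end

theorem lemma9:
  fixes n k :: nat and cl :: "nat \<Rightarrow> nat" and Q W :: "real mat" and \<rho> \<Delta> :: real
  defines "B \<equiv> mat k k (\<lambda>(i, j). Q $$ (i, j) * W $$ (i, j))"
  defines "P \<equiv> partition_mat n k cl"
  defines "A \<equiv> P * B * transpose_mat P"
  defines "L \<equiv> mat n n (\<lambda>(i, j). if i = j then (A *\<^sub>v vec n (\<lambda>_. 1)) $ i else 0) - A"
  defines "nmin \<equiv> real (MIN j\<in>{..<k}. card (blk n cl j))"
  defines "bmin \<equiv> (MIN i\<in>{..<k}. (B *\<^sub>v vec k (\<lambda>_. 1)) $ i)"
  assumes "k < n"
    and "\<forall>i<n. cl i < k"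
    and "\<forall>j<k. blk n cl j \<noteq> {}"
    and "Q \<in> carrier_mat k k" and "W \<in> carrier_mat k k"
    and "transpose_mat Q = Q" and "transpose_mat W = W"
    and "\<forall>i<k. \<forall>j<k. 0 \<le> Q $$ (i, j) \<and> Q $$ (i, j) \<le> 1 \<and> 0 \<le> W $$ (i, j)"
    and "\<rho> \<ge> 1" and "\<Delta> > 0"
    and "real (MAX j\<in>{..<k}. card (blk n cl j)) / real (MIN j\<in>{..<k}. card (blk n cl j)) \<le> \<rho>"
    and "(MIN i\<in>{..<k}. B $$ (i, i))
           - 2 * \<rho> * (MAX i\<in>{..<k}. \<Sum>j\<in>{..<k} - {i}. B $$ (i, j)) \<ge> \<Delta>"
  shows "block_ideal n k cl L
         \<and> eig_asc L (k + 1) \<ge> bmin * nmin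
         \<and> eig_asc L (k + 1) - eig_asc L k \<ge> \<Delta> * nmin"
proof -
  note as = assms(7-)
  have Bc: "B \<in> carrier_mat k k" unfolding B_def by simp
  have Qs: "Q $$ (a, b) = Q $$ (b, a)" if "a < k" "b < k" for a b
    using arg_cong[OF as(6), of "\<lambda>M. M $$ (a, b)"] as(4) that by auto
  have Ws: "W $$ (a, b) = W $$ (b, a)" if "a < k" "b < k" for a b
    using arg_cong[OF as(7), of "\<lambda>M. M $$ (a, b)"] as(5) that by auto
  interpret w: wsbm n k cl B
  proof
    show "k < n" "\<forall>i<n. cl i < k" "\<forall>j<k. blk n cl j \<noteq> {}" "B \<in> carrier_mat k k" using as Bc by auto
    show "\<forall>a<k. \<forall>b<k. B $$ (a, b) = B $$ (b, a)" unfolding B_def using Qs Ws by auto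
    show "\<forall>a<k. \<forall>b<k. 0 \<le> B $$ (a, b)" unfolding B_def using as(8) by auto
  qed
  have LL: "L = w.L" unfolding L_def A_def P_def w.L_def w.A_def w.P_def ..
  have n1: "w.mind - w.cc \<ge> \<Delta> * nmin" and n2: "w.mind \<ge> bmin * nmin"
    using w.numeric[OF as(9,10,11,12)] unfolding nmin_def bmin_def by auto
  have nmin_pos: "nmin > 0"
  proof -
    have "(MIN j\<in>{..<k}. card (blk n cl j)) \<in> (\<lambda>j. card (blk n cl j)) ` {..<k}"
      using w.fin_img by (rule Min_in)
    then obtain a where "a < k" "(MIN j\<in>{..<k}. card (blk n cl j)) = card (blk n cl a)" by auto
    thus ?thesis unfolding nmin_def using w.nb_pos unfolding w.nb_def by simp
  qed
  have gap: "w.cc < w.mind" using n1 nmin_pos as(10) by (smt (verit) mult_pos_pos)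
  from w.main_spec[OF gap] show ?thesis unfolding LL using n1 n2 by linarith
qed

end
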